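(* Let $\Theta\subset\mathbb{R}^p$ be compact and convex, let $\mathcal U$ be an open neighborhood of $\Theta$, and let $\mathscr F:\mathcal U\to\mathbb{R}$ be continuously differentiable. Let $\mathscr G:\Theta\times\Theta\to\mathbb R$ be differentiable in its first argument and satisfy, for all $\boldsymbol\theta,\boldsymbol\theta'\in\Theta$: (majorization) $\mathscr G(\boldsymbol\theta\mid\boldsymbol\theta')\ge\mathscr F(\boldsymbol\theta)$; (strong tangency) $\mathscr G(\boldsymbol\theta\mid\boldsymbol\theta)=\mathscr F(\boldsymbol\theta)$ and $\nabla_1\mathscr G(\boldsymbol\theta\mid\boldsymbol\theta)=\nabla\mathscr F(\boldsymbol\theta)$; (regularity) for each fixed $\boldsymbol\theta'$, $\nabla_1\mathscr G(\cdot\mid\boldsymbol\theta')$ is $L$-Lipschitz on $\Theta$. Let $(\varepsilon_t)_{t\ge0}$, $(\delta_t)_{t\ge0}$ be sequences of strictly positive numbers with $\sum_t\varepsilon_t<\infty$ and $\sum_t\delta_t\le\delta$ for some $\delta\in(0,1)$. Let $(\widehat{\boldsymbol\theta}_t)_{t\ge0}$ be generated by $\widehat{\boldsymbol\theta}_{t+1}\in\arg\min_{\boldsymbol\theta\in\Theta}\widehat{\mathscr G}_t(\boldsymbol\theta\mid\widehat{\boldsymbol\theta}_t)$, where $\widehat{\mathscr G}_t(\cdot\mid\cdot)$ are random approximations of $\mathscr G$ such that for every $t\ge0$, $$\mathbb P\Big(\max_{\boldsymbol\theta\in\Theta}\big|\mathscr G(\boldsymbol\theta\mid\widehat{\boldsymbol\theta}_t)-\widehat{\mathscr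 G}_t(\boldsymbol\theta\mid\widehat{\boldsymbol\theta}_t)\big|\le\tfrac{\varepsilon_t}{2}\ \Big|\ \widehat{\boldsymbol\theta}_t\Big)\ge1-\delta_t .$$ Then, with probability at least $1-\delta$, every accumulation point $\boldsymbol\theta^*$ of $(\widehat{\boldsymbol\theta}_t)$ is a first-order stationary point of $\mathscr F$ over $\Theta$, i.e. $\langle\nabla\mathscr F(\boldsymbol\theta^* ),\boldsymbol\theta-\boldsymbol\theta^*\rangle\ge0$ for all $\boldsymbol\theta\in\Theta$.
   Context: $\nabla_1\mathscr G(\boldsymbol\theta\mid\boldsymbol\theta')$ denotes the gradient of $\mathscr G$ with respect to its first argument $\boldsymbol\theta$, with the anchor $\boldsymbol\theta'$ held fixed. $\langle\cdot,\cdot\rangle$ is the Euclidean inner product. *)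

theory Defs
  imports "HOL-Analysis.Analysis" "HOL-Probability.Probability"
begin

definition cond_prob_given :: "'a measure \<Rightarrow> ('a \<Rightarrow> 'b::topological_space) \<Rightarrow> 'a set \<Rightarrow> 'a \<Rightarrow> real" where
  "cond_prob_given M X A = real_cond_exp M (vimage_algebra (space M) X borel) (indicator A)"

definition seq_accumulation_point :: "(nat \<Rightarrow> 'b::topological_space) \<Rightarrow> 'b \<Rightarrow> bool" where
  "seq_accumulation_point s x \<longleftrightarrow> (\<exists>r. strict_mono r \<and> (s \<circ> r) \<longlonglongrightarrow> x)"

end

theory Submission
  imports Defs
begin

lemma prob_E:
  assumes P: "prob_space M" and X: "X \<in> borel_measurable M" and E: "E \<in> sets M"
    and ae: "AE \<omega> in M. cond_prob_given M X E \<omega> \<ge> c"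
  shows "measure M E \<ge> c"
proof -
  interpret prob_space M by (rule P)
  let ?F = "vimage_algebra (space M) X borel"
  have sub: "subalgebra M ?F" unfolding subalgebra_def
    using sets_image_in_sets[OF refl X] by simp
  interpret finite_measure_subalgebra M ?F
    by unfold_locales (rule sub)
  have int: "integrable M (indicator E :: 'a \<Rightarrow> real)" using E by (intro integrable_real_indicator) (auto simp: emeasure_eq_measure)
  have "c = (\<integral>x. c \<partial>M)" by (simp add: prob_space)
  also have "\<dots> \<le> (\<integral>x. real_cond_exp M ?F (indicator E) x \<partial>M)"
    apply (rule integral_mono_AE)
    using ae real_cond_exp_int(1)[OF int] by (auto simp: cond_prob_given_def)
  also have "\<dots> = (\<integral>x. indicator E x \<partial>M)" by (rule real_cond_exp_int(2)[OF int])
  also have "\<dots> = measure M E" using E sets.sets_into_space[OF E] by (simp add: Int_absorb2)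
  finally show ?thesis .
qed

lemma descent:
  fixes \<Theta> :: "'v::euclidean_space set" and G :: "'v \<Rightarrow> 'v \<Rightarrow> real"
  assumes cvx: "convex \<Theta>" and a: "a \<in> \<Theta>" and b: "b \<in> \<Theta>" and s: "0 \<le> s" "s \<le> 1"
    and G_deriv: "\<And>\<theta>. \<theta> \<in> \<Theta> \<Longrightarrow>
        ((\<lambda>x. G x a) has_derivative (\<lambda>h. grad1G \<theta> a \<bullet> h)) (at \<theta> within \<Theta>)"
    and lip: "L-lipschitz_on \<Theta> (\<lambda>\<theta>. grad1G \<theta> a)"
  shows "G (a + s *\<^sub>R (b - a)) a \<le> G a a + grad1G a a \<bullet> (s *\<^sub>R (b - a)) + L * (norm (s *\<^sub>R (b - a)))\<^sup>2"
proof -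
  define d where "d = s *\<^sub>R (b - a)"
  have pin: "a + u *\<^sub>R d \<in> \<Theta>" if "0 \<le> u" "u \<le> 1" for u
  proof -
    have "a + u *\<^sub>R d = (1 - u * s) *\<^sub>R a + (u * s) *\<^sub>R b" by (simp add: d_def algebra_simps)
    moreover have "0 \<le> u * s" "u * s \<le> 1" using that s by (auto intro: mult_le_one)
    ultimately show ?thesis using cvx a b unfolding convex_def by (metis diff_ge_0_iff_ge diff_add_cancel)
  qed
  have der: "((\<lambda>u. G (a + u *\<^sub>R d) a) has_derivative (\<lambda>v. grad1G (a + u *\<^sub>R d) a \<bullet> (v *\<^sub>R d))) (at u within {0..1})"
    if "0 \<le> u" "u \<le> 1" for u
  proof -
    have f: "((\<lambda>u. a + u *\<^sub>R d) has_derivative (\<lambda>v. v *\<^sub>R d)) (at u within {0..1})"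
      by (auto intro!: derivative_eq_intros)
    have g: "((\<lambda>x. G x a) has_derivative (\<lambda>h. grad1G (a + u *\<^sub>R d) a \<bullet> h)) (at (a + u *\<^sub>R d) within (\<lambda>u. a + u *\<^sub>R d) ` {0..1})"
      by (rule has_derivative_subset[OF G_deriv[OF pin[OF that]]]) (auto intro: pin)
    show ?thesis using diff_chain_within[OF f g] by (simp add: o_def)
  qed
  obtain x where x: "x \<in> {0<..<1}" and eq: "G (a + 1 *\<^sub>R d) a - G (a + 0 *\<^sub>R d) a = grad1G (a + x *\<^sub>R d) a \<bullet> ((1 - 0) *\<^sub>R d)"
    using mvt_simple[of 0 1 "\<lambda>u. G (a + u *\<^sub>R d) a", OF _ der] by auto
  have "dist (grad1G (a + x *\<^sub>R d) a) (grad1G a a) \<le> L * dist (a + x *\<^sub>R d) a"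
    by (rule lipschitz_onD[OF lip pin a]) (use x in auto)
  also have "\<dots> \<le> L * norm d" using x lipschitz_on_nonneg[OF lip]
    by (intro mult_left_mono) (auto simp: dist_norm intro!: mult_left_le_one_le)
  finally have l: "norm (grad1G (a + x *\<^sub>R d) a - grad1G a a) \<le> L * norm d" by (simp add: dist_norm)
  have "(grad1G (a + x *\<^sub>R d) a - grad1G a a) \<bullet> d \<le> norm (grad1G (a + x *\<^sub>R d) a - grad1G a a) * norm d"
    by (rule norm_cauchy_schwarz)
  also have "\<dots> \<le> L * norm d * norm d" using l by (intro mult_right_mono) auto
  finally have "grad1G (a + x *\<^sub>R d) a \<bullet> d \<le> grad1G a a \<bullet> d + L * (norm d)\<^sup>2"
    by (simp add: inner_diff_left power2_eq_square)
  then show ?thesis using eq by (simp add: d_def)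
qed

theorem theorem4p4:
  fixes M :: "'a measure"
    and \<Theta> U :: "'v::euclidean_space set"
    and F :: "'v \<Rightarrow> real" and gradF :: "'v \<Rightarrow> 'v"
    and G :: "'v \<Rightarrow> 'v \<Rightarrow> real" and grad1G :: "'v \<Rightarrow> 'v \<Rightarrow> 'v"
    and L :: real
    and \<epsilon> \<delta>s :: "nat \<Rightarrow> real" and \<delta> :: real
    and thetahat :: "nat \<Rightarrow> 'a \<Rightarrow> 'v"
    and Ghat :: "nat \<Rightarrow> 'a \<Rightarrow> 'v \<Rightarrow> 'v \<Rightarrow> real"
  assumes P: "prob_space M"
    and Theta: "compact \<Theta>" "convex \<Theta>"
    and U: "open U" "\<Theta> \<subseteq> U"
    and F_deriv: "\<And>x. x \<in> U \<Longrightarrow> (F has_derivative (\<lambda>h. gradF x \<bullet> h)) (at x)"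
    and F_C1: "continuous_on U gradF"
    and G_deriv: "\<And>\<theta> \<theta>'. \<theta> \<in> \<Theta> \<Longrightarrow> \<theta>' \<in> \<Theta> \<Longrightarrow>
        ((\<lambda>x. G x \<theta>') has_derivative (\<lambda>h. grad1G \<theta> \<theta>' \<bullet> h)) (at \<theta> within \<Theta>)"
    and major: "\<And>\<theta> \<theta>'. \<theta> \<in> \<Theta> \<Longrightarrow> \<theta>' \<in> \<Theta> \<Longrightarrow> G \<theta> \<theta>' \<ge> F \<theta>"
    and tang: "\<And>\<theta>. \<theta> \<in> \<Theta> \<Longrightarrow> G \<theta> \<theta> = F \<theta>"
    and tang_grad: "\<And>\<theta>. \<theta> \<in> \<Theta> \<Longrightarrow> grad1G \<theta> \<theta> = gradF \<theta>"
    and lip: "\<And>\<theta>'. \<theta>' \<in> \<Theta> \<Longrightarrow> L-lipschitz_on \<Theta> (\<lambda>\<theta>. grad1G \<theta> \<theta>')"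
    and eps_pos: "\<And>t. \<epsilon> t > 0" and eps_sum: "summable \<epsilon>"
    and del_pos: "\<And>t. \<delta>s t > 0" and del_sum: "summable \<delta>s" "(\<Sum>t. \<delta>s t) \<le> \<delta>"
    and del: "0 < \<delta>" "\<delta> < 1"
    and meas: "\<And>t. thetahat t \<in> borel_measurable M"
    and init: "\<And>\<omega>. \<omega> \<in> space M \<Longrightarrow> thetahat 0 \<omega> \<in> \<Theta>"
    and argmin: "\<And>t \<omega>. \<omega> \<in> space M \<Longrightarrow>
        thetahat (Suc t) \<omega> \<in> \<Theta> \<and>
        (\<forall>\<theta>\<in>\<Theta>. Ghat t \<omega> (thetahat (Suc t) \<omega>) (thetahat t \<omega>) \<le> Ghat t \<omega> \<theta> (thetahat t \<omega>))"
    and approx_event: "\<And>t. {\<omega>\<in>space M. \<forall>\<theta>\<in>\<Theta>.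
        \<bar>G \<theta> (thetahat t \<omega>) - Ghat t \<omega> \<theta> (thetahat t \<omega>)\<bar> \<le> \<epsilon> t / 2} \<in> sets M"
    and approx: "\<And>t. AE \<omega> in M. cond_prob_given M (thetahat t)
        {\<omega>\<in>space M. \<forall>\<theta>\<in>\<Theta>.
          \<bar>G \<theta> (thetahat t \<omega>) - Ghat t \<omega> \<theta> (thetahat t \<omega>)\<bar> \<le> \<epsilon> t / 2} \<omega> \<ge> 1 - \<delta>s t"
  shows "\<exists>A\<in>sets M. measure M A \<ge> 1 - \<delta> \<and>
    (\<forall>\<omega>\<in>A. \<forall>\<theta>s. seq_accumulation_point (\<lambda>t. thetahat t \<omega>) \<theta>s \<longrightarrow>
        (\<forall>\<theta>\<in>\<Theta>. gradF \<theta>s \<bullet> (\<theta> - \<theta>s) \<ge> 0))"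
proof -
  interpret prob_space M by (rule P)
  define E where "E t = {\<omega>\<in>space M. \<forall>\<theta>\<in>\<Theta>.
        \<bar>G \<theta> (thetahat t \<omega>) - Ghat t \<omega> \<theta> (thetahat t \<omega>)\<bar> \<le> \<epsilon> t / 2}" for t
  have Esets: "E t \<in> sets M" for t unfolding E_def by (rule approx_event)
  have PE: "measure M (E t) \<ge> 1 - \<delta>s t" for t
    using prob_E[OF P meas Esets approx[of t, folded E_def]] .
  define A where "A = (\<Inter>t. E t)"
  have Asets: "A \<in> sets M" unfolding A_def using Esets by auto
  have PEc: "measure M (space M - E t) \<le> \<delta>s t" for t
    using prob_compl[OF Esets[of t]] PE[of t] by simp
  have sumc: "summable (\<lambda>t. measure M (space M - E t))"
    by (rule summable_comparison_test'[OF del_sum(1)]) (use PEc in auto)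
  have "space M - A = (\<Union>t. space M - E t)" unfolding A_def by auto
  hence "measure M (space M - A) = measure M (\<Union>t. space M - E t)" by simp
  also have "\<dots> \<le> (\<Sum>t. measure M (space M - E t))"
    by (rule finite_measure_subadditive_countably[OF _ sumc]) (use Esets in auto)
  also have "\<dots> \<le> (\<Sum>t. \<delta>s t)" by (rule suminf_le[OF PEc sumc del_sum(1)])
  also have "\<dots> \<le> \<delta>" by (rule del_sum(2))
  finally have "measure M A \<ge> 1 - \<delta>" using prob_compl[OF Asets] by simp
  moreover have "\<forall>\<omega>\<in>A. \<forall>\<theta>s. seq_accumulation_point (\<lambda>t. thetahat t \<omega>) \<theta>s \<longrightarrow>
        (\<forall>\<theta>\<in>\<Theta>. gradF \<theta>s \<bullet> (\<theta> - \<theta>s) \<ge> 0)"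
  proof (intro ballI allI impI)
    fix \<omega> \<theta>s \<theta>' assume \<omega>A: "\<omega> \<in> A" and acc: "seq_accumulation_point (\<lambda>t. thetahat t \<omega>) \<theta>s"
      and \<theta>': "\<theta>' \<in> \<Theta>"
    define x where "x t = thetahat t \<omega>" for t
    have \<omega>E: "\<And>t. \<omega> \<in> E t" using \<omega>A unfolding A_def by auto
    have \<omega>: "\<omega> \<in> space M" using \<omega>E[of 0] unfolding E_def by auto
    have xin: "x t \<in> \<Theta>" for t
      by (cases t) (auto simp: x_def init[OF \<omega>] argmin[OF \<omega>])
    have key: "F (x (Suc t)) \<le> G \<theta> (x t) + \<epsilon> t" if th: "\<theta> \<in> \<Theta>" for t \<theta>
    proof -
      have ap: "\<And>\<theta>. \<theta> \<in> \<Theta> \<Longrightarrow> \<bar>G \<theta> (x t) - Ghat t \<omega> \<theta> (x t)\<bar> \<le> \<epsilon> t / 2"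
        using \<omega>E[of t] unfolding E_def x_def by auto
      have "F (x (Suc t)) \<le> G (x (Suc t)) (x t)" by (rule major[OF xin xin])
      also have "\<dots> \<le> Ghat t \<omega> (x (Suc t)) (x t) + \<epsilon> t / 2" using ap[OF xin[of "Suc t"]] by linarith
      also have "\<dots> \<le> Ghat t \<omega> \<theta> (x t) + \<epsilon> t / 2"
        using argmin[OF \<omega>, of t] th unfolding x_def by auto
      also have "\<dots> \<le> G \<theta> (x t) + \<epsilon> t" using ap[OF th] by linarith
      finally show ?thesis .
    qed
    have step: "F (x (Suc t)) \<le> F (x t) + \<epsilon> t" for t
      using key[OF xin[of t], of t] tang[OF xin[of t]] by simp
    have Fcont: "continuous_on U F"
      by (intro continuous_at_imp_continuous_on ballI) (rule has_derivative_continuous[OF F_deriv])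
    have "compact (F ` \<Theta>)"
      by (rule compact_continuous_image[OF continuous_on_subset[OF Fcont U(2)] Theta(1)])
    hence "bounded (F ` \<Theta>)" by (rule compact_imp_bounded)
    then obtain B where B0: "\<forall>y\<in>F ` \<Theta>. \<bar>y\<bar> \<le> B" unfolding bounded_real by blast
    have B: "\<And>\<theta>. \<theta> \<in> \<Theta> \<Longrightarrow> \<bar>F \<theta>\<bar> \<le> B" using B0 by simp
    define b where "b t = F (x t) - (\<Sum>i<t. \<epsilon> i)" for t
    have "decseq b" unfolding decseq_Suc_iff b_def using step by (simp add: algebra_simps)
    moreover have "\<forall>t. - B - suminf \<epsilon> \<le> b t"
    proof
      fix t
      have "(\<Sum>i<t. \<epsilon> i) \<le> suminf \<epsilon>"
        by (rule sum_le_suminf[OF eps_sum]) (auto intro: less_imp_le eps_pos)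
      thus "- B - suminf \<epsilon> \<le> b t" using B[OF xin[of t]] unfolding b_def by linarith
    qed
    ultimately obtain Lb where Lb: "b \<longlonglongrightarrow> Lb" by (rule decseq_convergent)
    have Fx: "(\<lambda>t. F (x t)) \<longlonglongrightarrow> Lb + suminf \<epsilon>"
    proof -
      have "(\<lambda>t. b t + (\<Sum>i<t. \<epsilon> i)) \<longlonglongrightarrow> Lb + suminf \<epsilon>"
        by (intro tendsto_add Lb summable_LIMSEQ eps_sum)
      thus ?thesis unfolding b_def by simp
    qed
    define Fs where "Fs = Lb + suminf \<epsilon>"
    from acc obtain r where r: "strict_mono r" and conv: "(\<lambda>k. x (r k)) \<longlonglongrightarrow> \<theta>s"
      unfolding seq_accumulation_point_def x_def by (auto simp: o_def)
    have \<theta>s: "\<theta>s \<in> \<Theta>"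
      using closed_sequentially[OF compact_imp_closed[OF Theta(1)] _ conv] xin by auto
    have L0: "0 \<le> L" using lipschitz_on_nonneg[OF lip[OF \<theta>s]] .
    have gcont: "isCont gradF \<theta>s"
    proof -
      have "\<forall>x\<in>U. isCont gradF x" using F_C1 continuous_on_eq_continuous_at[OF U(1), of gradF] by blast
      thus ?thesis using \<theta>s U(2) by (simp add: subset_iff)
    qed
    have F1: "(\<lambda>k. F (x (Suc (r k)))) \<longlonglongrightarrow> Fs"
      using LIMSEQ_subseq_LIMSEQ[OF Fx[THEN LIMSEQ_Suc] r] unfolding Fs_def by (simp add: o_def)
    have F0: "(\<lambda>k. F (x (r k))) \<longlonglongrightarrow> Fs"
      using LIMSEQ_subseq_LIMSEQ[OF Fx r] unfolding Fs_def by (simp add: o_def)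
    have E0: "(\<lambda>k. \<epsilon> (r k)) \<longlonglongrightarrow> 0"
      using LIMSEQ_subseq_LIMSEQ[OF summable_LIMSEQ_zero[OF eps_sum] r] by (simp add: o_def)
    have G0: "(\<lambda>k. gradF (x (r k))) \<longlonglongrightarrow> gradF \<theta>s"
      by (rule isCont_tendsto_compose[OF gcont conv])
    define g where "g = gradF \<theta>s \<bullet> (\<theta>' - \<theta>s)"
    define D where "D = (norm (\<theta>' - \<theta>s))\<^sup>2"
    have lim: "0 \<le> g + L * s * D" if s: "0 < s" "s \<le> 1" for s
    proof -
      have ineq: "F (x (Suc (r k))) \<le> F (x (r k)) + s * (gradF (x (r k)) \<bullet> (\<theta>' - x (r k)))
          + L * s\<^sup>2 * (norm (\<theta>' - x (r k)))\<^sup>2 + \<epsilon> (r k)" for k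
      proof -
        let ?a = "x (r k)"
        have pin: "?a + s *\<^sub>R (\<theta>' - ?a) \<in> \<Theta>"
        proof -
          have "?a + s *\<^sub>R (\<theta>' - ?a) = (1 - s) *\<^sub>R ?a + s *\<^sub>R \<theta>'" by (simp add: algebra_simps)
          thus ?thesis using Theta(2) xin \<theta>' s unfolding convex_def by auto
        qed
        have d: "G (?a + s *\<^sub>R (\<theta>' - ?a)) ?a \<le> G ?a ?a + grad1G ?a ?a \<bullet> (s *\<^sub>R (\<theta>' - ?a)) + L * (norm (s *\<^sub>R (\<theta>' - ?a)))\<^sup>2"
          by (rule descent[OF Theta(2) xin[of "r k"] \<theta>', where grad1G=grad1G and L=L])
             (use s G_deriv xin lip in auto)
        have "(norm (s *\<^sub>R (\<theta>' - ?a)))\<^sup>2 = s\<^sup>2 * (norm (\<theta>' - ?a))\<^sup>2"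
          using s by (simp add: power_mult_distrib)
        thus ?thesis using key[OF pin, of "r k"] d tang[OF xin] tang_grad[OF xin] by simp
      qed
      have "Fs \<le> Fs + s * g + L * s\<^sup>2 * D + 0"
      proof (rule LIMSEQ_le[OF F1 _ exI[of _ 0]])
        show "(\<lambda>k. F (x (r k)) + s * (gradF (x (r k)) \<bullet> (\<theta>' - x (r k)))
          + L * s\<^sup>2 * (norm (\<theta>' - x (r k)))\<^sup>2 + \<epsilon> (r k)) \<longlonglongrightarrow> Fs + s * g + L * s\<^sup>2 * D + 0"
          unfolding g_def D_def by (intro tendsto_intros F0 G0 conv E0)
      qed (use ineq in auto)
      hence "0 \<le> s * (g + L * s * D)" by (simp add: algebra_simps power2_eq_square)
      thus ?thesis using s by (simp add: zero_le_mult_iff)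
    qed
    show "gradF \<theta>s \<bullet> (\<theta>' - \<theta>s) \<ge> 0"
    proof (rule ccontr)
      assume "\<not> ?thesis"
      hence gneg: "g < 0" unfolding g_def by simp
      define s where "s = min 1 ((- g) / (2 * (L * D + 1)))"
      have D0: "0 \<le> D" unfolding D_def by simp
      have LD: "0 \<le> L * D" using L0 D0 by simp
      have s0: "0 < s" "s \<le> 1" unfolding s_def using gneg LD by (auto simp: divide_neg_pos)
      have "L * s * D = (L * D) * s" by simp
      also have "\<dots> \<le> (L * D + 1) * s" using s0 by (intro mult_right_mono) auto
      also have "\<dots> \<le> (L * D + 1) * ((- g) / (2 * (L * D + 1)))"
        unfolding s_def using LD by (intro mult_left_mono) auto
      also have "\<dots> = - g / 2" using LD by (simp add: field_simps)
      finally show False using lim[OF s0] gneg by linarith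
    qed
  qed
  ultimately show ?thesis using Asets by blast
qed

end
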